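(* For every $l\in L$ and $x_0\in\{x,y\}$: $\partial^A_{x_0}(l)=\operatorname{ad}_{\partial^L_{x_0}(l)}(1\otimes1)$.
   Context: $A=\mathbb{R}\langle x,y\rangle$; $L\subset A$ the free Lie algebra on $x,y$. $\partial^A_{x_0}:A\to A\otimes A$ is given on monomials by $a_1\cdots a_n\mapsto\sum_{i:\,a_i=x_0}a_1\cdots a_{i-1}\otimes a_{i+1}\cdots a_n$; write $\partial^A_{x_0}(l)=\sum\partial^1\otimes\partial^2$, and $\partial^L_{x_0}(l)=\sum\partial^1\epsilon(\partial^2)\in A$ where $\epsilon:A\to\mathbb{R}$ is the constant-term algebra homomorphism. $A\otimes A$ is an $A$-bimodule via $a(b\otimes c)d=ab\otimes cd$. For $a\in A$, $\operatorname{ad}_a:A\otimes A\to A\otimes A$ is defined linearly in $a$ by $\operatorname{ad}_1=\mathrm{id}$ and $\operatorname{ad}_{za}(m)=z\,\operatorname{ad}_a(m)-\operatorname{ad}_a(m)\,z$ for $z\in\{x,y\}$ and monomials $a$. *)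

theory Defs
  imports Complex_Main "HOL-Library.Poly_Mapping"
begin

datatype gen = GX | GY

type_synonym word = "gen list"

text \<open>A = R<x,y>: finitely supported real coefficient functions on words (monomials).
  A \<otimes> A: finitely supported real coefficient functions on pairs of words,
  the pair (u,v) standing for the basis tensor u \<otimes> v.\<close>
type_synonym alg = "word \<Rightarrow>\<^sub>0 real"
type_synonym alg2 = "(word \<times> word) \<Rightarrow>\<^sub>0 real"

definition gen_el :: "gen \<Rightarrow> alg" where
  "gen_el z = Poly_Mapping.single [z] 1"

definition one_alg :: alg where
  "one_alg = Poly_Mapping.single [] 1"

definition smul :: "real \<Rightarrow> alg \<Rightarrow> alg" where
  "smul c p = Poly_Mapping.map (\<lambda>r. c * r) p"

definition smul2 :: "real \<Rightarrow> alg2 \<Rightarrow> alg2" where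
  "smul2 c p = Poly_Mapping.map (\<lambda>r. c * r) p"

definition amul :: "alg \<Rightarrow> alg \<Rightarrow> alg" where
  "amul p q = (\<Sum>u\<in>Poly_Mapping.keys p. \<Sum>v\<in>Poly_Mapping.keys q.
      Poly_Mapping.single (u @ v) (Poly_Mapping.lookup p u * Poly_Mapping.lookup q v))"

definition bracket :: "alg \<Rightarrow> alg \<Rightarrow> alg" where
  "bracket a b = amul a b - amul b a"

text \<open>The free Lie algebra L on x,y, realised as the Lie subalgebra of A generated by x and y.\<close>
inductive_set freeLie :: "alg set" where
  gen: "gen_el z \<in> freeLie"
| zero: "0 \<in> freeLie"
| add: "a \<in> freeLie \<Longrightarrow> b \<in> freeLie \<Longrightarrow> a + b \<in> freeLie"
| smul: "a \<in> freeLie \<Longrightarrow> smul c a \<in> freeLie"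
| brk: "a \<in> freeLie \<Longrightarrow> b \<in> freeLie \<Longrightarrow> bracket a b \<in> freeLie"

definition eps :: "alg \<Rightarrow> real" where
  "eps p = Poly_Mapping.lookup p []"

definition dA :: "gen \<Rightarrow> alg \<Rightarrow> alg2" where
  "dA z p = (\<Sum>w\<in>Poly_Mapping.keys p. \<Sum>i\<in>{i. i < length w \<and> w ! i = z}.
      Poly_Mapping.single (take i w, drop (Suc i) w) (Poly_Mapping.lookup p w))"

definition id_eps :: "alg2 \<Rightarrow> alg" where
  "id_eps T = (\<Sum>(u,v)\<in>Poly_Mapping.keys T.
      Poly_Mapping.single u (Poly_Mapping.lookup T (u,v) * eps (Poly_Mapping.single v 1)))"

definition dL :: "gen \<Rightarrow> alg \<Rightarrow> alg" where
  "dL z l = id_eps (dA z l)"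

definition bimod :: "alg \<Rightarrow> alg2 \<Rightarrow> alg \<Rightarrow> alg2" where
  "bimod a T d = (\<Sum>u\<in>Poly_Mapping.keys a. \<Sum>(b,c)\<in>Poly_Mapping.keys T. \<Sum>v\<in>Poly_Mapping.keys d.
      Poly_Mapping.single (u @ b, c @ v) (Poly_Mapping.lookup a u * Poly_Mapping.lookup T (b,c) * Poly_Mapping.lookup d v))"

fun ad_word :: "word \<Rightarrow> alg2 \<Rightarrow> alg2" where
  "ad_word [] m = m"
| "ad_word (z # w) m =
     bimod (gen_el z) (ad_word w m) one_alg - bimod one_alg (ad_word w m) (gen_el z)"

definition ad :: "alg \<Rightarrow> alg2 \<Rightarrow> alg2" where
  "ad a m = (\<Sum>w\<in>Poly_Mapping.keys a. smul2 (Poly_Mapping.lookup a w) (ad_word w m))"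

definition one_tensor :: alg2 where
  "one_tensor = Poly_Mapping.single ([], []) 1"

end

theory Submission
  imports Defs
begin

definition lext :: "('k \<Rightarrow> real \<Rightarrow> 'b::ab_group_add) \<Rightarrow> ('k \<Rightarrow>\<^sub>0 real) \<Rightarrow> 'b" where
  "lext G p = (\<Sum>w\<in>Poly_Mapping.keys p. G w (Poly_Mapping.lookup p w))"

lemma lext_add:
  assumes "\<And>w a b. G w (a+b) = G w a + G w b"
  shows "lext G (p+q) = lext G p + lext G q"
proof -
  have z: "G w 0 = 0" for w using assms[of w 0 0] by simp
  let ?S = "Poly_Mapping.keys p \<union> Poly_Mapping.keys q"
  have fin: "finite ?S" by simp
  have e: "lext G r = (\<Sum>w\<in>?S. G w (Poly_Mapping.lookup r w))" if "Poly_Mapping.keys r \<subseteq> ?S" for r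
    unfolding lext_def
    by (rule sum.mono_neutral_left[OF fin that]) (auto simp: in_keys_iff z)
  have "lext G (p+q) = (\<Sum>w\<in>?S. G w (Poly_Mapping.lookup p w) + G w (Poly_Mapping.lookup q w))"
    by (subst e) (auto simp: keys_add lookup_add assms)
  also have "\<dots> = lext G p + lext G q"
    by (simp add: sum.distrib e)
  finally show ?thesis .
qed

lemma lext_single: "G k 0 = 0 \<Longrightarrow> lext G (Poly_Mapping.single k c) = G k c"
  by (cases "c = 0") (simp_all add: lext_def)

lemma lext_zero [simp]: "lext G 0 = 0"
  by (simp add: lext_def)

lemma lext_fun_add: "lext (\<lambda>w a. G w a + H w a) p = lext G p + lext H p"
  by (simp add: lext_def sum.distrib)

lemma lext_fun_zero [simp]: "lext (\<lambda>w a. 0) p = 0"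
  by (simp add: lext_def)

lemma pm_expand: "(p::'k \<Rightarrow>\<^sub>0 real) = (\<Sum>k\<in>Poly_Mapping.keys p. Poly_Mapping.single k (Poly_Mapping.lookup p k))"
proof (rule poly_mapping_eqI)
  fix j
  show "Poly_Mapping.lookup p j = Poly_Mapping.lookup (\<Sum>k\<in>Poly_Mapping.keys p. Poly_Mapping.single k (Poly_Mapping.lookup p k)) j"
    by (cases "j \<in> Poly_Mapping.keys p") (auto simp: lookup_sum lookup_single when_def in_keys_iff)
qed

lemma pm_induct [case_names zero single add]:
  fixes p :: "'k \<Rightarrow>\<^sub>0 real"
  assumes "P 0" "\<And>k c. P (Poly_Mapping.single k c)" "\<And>p q. P p \<Longrightarrow> P q \<Longrightarrow> P (p+q)"
  shows "P p"
proof -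
  have "P (\<Sum>k\<in>S. Poly_Mapping.single k (Poly_Mapping.lookup p k))" if "finite S" for S
    using that by (induction S rule: finite_induct) (auto simp: assms)
  then show ?thesis by (subst pm_expand) simp
qed

lemma add_diff_gen:
  fixes F :: "'a::ab_group_add \<Rightarrow> 'b::ab_group_add"
  assumes "\<And>p q. F (p+q) = F p + F q"
  shows "F (p - q) = F p - F q"
proof -
  interpret additive F by standard (rule assms)
  show ?thesis by (rule diff)
qed

lemma add_zero_gen:
  fixes F :: "'a::ab_group_add \<Rightarrow> 'b::ab_group_add"
  assumes "\<And>p q. F (p+q) = F p + F q"
  shows "F 0 = 0"
  using assms[of 0 0] by simp

lemma add_sum_gen:
  fixes F :: "'a::ab_group_add \<Rightarrow> 'b::ab_group_add"
  assumes "\<And>p q. F (p+q) = F p + F q"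
  shows "F (sum f S) = (\<Sum>i\<in>S. F (f i))"
proof -
  interpret additive F by standard (rule assms)
  show ?thesis by (rule sum)
qed

definition sc :: "real \<Rightarrow> ('k \<Rightarrow>\<^sub>0 real) \<Rightarrow> ('k \<Rightarrow>\<^sub>0 real)" where
  "sc c p = Poly_Mapping.map (\<lambda>r. c * r) p"

lemma lookup_sc [simp]: "Poly_Mapping.lookup (sc c p) k = c * Poly_Mapping.lookup p k"
  by (simp add: sc_def map.rep_eq when_def)

lemma sc_add [simp]: "sc c (p + q) = sc c p + sc c q"
  by (rule poly_mapping_eqI) (simp add: lookup_add algebra_simps)
lemma sc_add2 [simp]: "sc (c + d) p = sc c p + sc d p"
  by (rule poly_mapping_eqI) (simp add: lookup_add algebra_simps)
lemma sc_diff [simp]: "sc c (p - q) = sc c p - sc c q"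
  by (rule poly_mapping_eqI) (simp add: lookup_minus algebra_simps)
lemma sc_zero [simp]: "sc c 0 = 0" "sc 0 p = 0"
  by (rule poly_mapping_eqI, simp)+
lemma sc_one [simp]: "sc 1 p = p"
  by (rule poly_mapping_eqI) simp
lemma sc_sc [simp]: "sc c (sc d p) = sc (c*d) p"
  by (rule poly_mapping_eqI) simp
lemma sc_single [simp]: "sc c (Poly_Mapping.single k a) = Poly_Mapping.single k (c * a)"
  by (rule poly_mapping_eqI) (simp add: lookup_single when_def)
lemma sc_sum: "sc c (sum f S) = (\<Sum>i\<in>S. sc c (f i))"
  by (rule add_sum_gen) simp

lemma smul_sc: "smul = sc" "smul2 = sc"
  by (rule ext, rule ext, simp add: smul_def smul2_def sc_def)+


abbreviation (input) sg where "sg \<equiv> Poly_Mapping.single"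

lemma amul_lext: "amul p q = lext (\<lambda>u a. lext (\<lambda>v b. sg (u@v) (a*b)) q) p"
  by (simp add: amul_def lext_def)

lemma amul_add1 [simp]: "amul (p+p') q = amul p q + amul p' q"
  unfolding amul_lext
  by (rule lext_add) (simp add: distrib_right single_add lext_fun_add)

lemma amul_add2 [simp]: "amul p (q+q') = amul p q + amul p q'"
  unfolding amul_lext
  by (subst lext_add, simp add: distrib_left single_add)+ (simp add: lext_fun_add)

lemma amul_single [simp]: "amul (sg u a) (sg v b) = sg (u@v) (a*b)"
  unfolding amul_lext by (simp add: lext_single)

lemma amul_zero [simp]: "amul 0 q = 0" "amul p 0 = 0"
  by (rule add_zero_gen, simp)+

lemma amul_diff [simp]: "amul (p-p') q = amul p q - amul p' q" "amul p (q-q') = amul p q - amul p q'"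
  by (rule add_diff_gen, simp)+

definition lm :: "alg \<Rightarrow> alg2 \<Rightarrow> alg2" where "lm a T = bimod a T one_alg"
definition rm :: "alg2 \<Rightarrow> alg \<Rightarrow> alg2" where "rm T d = bimod one_alg T d"

lemma lm_lext: "lm a T = lext (\<lambda>u \<alpha>. lext (\<lambda>bc \<beta>. sg (u @ fst bc, snd bc) (\<alpha>*\<beta>)) T) a"
  by (simp add: lm_def bimod_def lext_def one_alg_def split_def)

lemma rm_lext: "rm T d = lext (\<lambda>bc \<beta>. lext (\<lambda>v \<gamma>. sg (fst bc, snd bc @ v) (\<beta>*\<gamma>)) d) T"
  by (simp add: rm_def bimod_def lext_def one_alg_def split_def)

lemma lm_add1 [simp]: "lm (p+p') T = lm p T + lm p' T"
  unfolding lm_lext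
  by (rule lext_add) (simp add: distrib_right single_add lext_fun_add)

lemma lm_add2 [simp]: "lm p (T+T') = lm p T + lm p T'"
  unfolding lm_lext
  by (subst lext_add, simp add: distrib_left single_add)+ (simp add: lext_fun_add)

lemma lm_single [simp]: "lm (sg u a) (sg (b,c) t) = sg (u@b, c) (a*t)"
  unfolding lm_lext by (simp add: lext_single)

lemma rm_add1 [simp]: "rm (T+T') d = rm T d + rm T' d"
  unfolding rm_lext
  by (rule lext_add) (simp add: distrib_right single_add lext_fun_add)

lemma rm_add2 [simp]: "rm T (d+d') = rm T d + rm T d'"
  unfolding rm_lext
  by (subst lext_add, simp add: distrib_left single_add)+ (simp add: lext_fun_add)

lemma rm_single [simp]: "rm (sg (b,c) t) (sg v a) = sg (b, c@v) (t*a)"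
  unfolding rm_lext by (simp add: lext_single)

lemma lm_zero [simp]: "lm 0 T = 0" "lm p 0 = 0"
  by (rule add_zero_gen, simp)+
lemma lm_diff [simp]: "lm (p-p') T = lm p T - lm p' T" "lm p (T-T') = lm p T - lm p T'"
  by (rule add_diff_gen, simp)+
lemma rm_zero [simp]: "rm 0 T = 0" "rm p 0 = 0"
  by (rule add_zero_gen, simp)+
lemma rm_diff [simp]: "rm (p-p') T = rm p T - rm p' T" "rm p (T-T') = rm p T - rm p T'"
  by (rule add_diff_gen, simp)+


lemma lm_single' [simp]: "lm (sg u a) (sg k t) = sg (u @ fst k, snd k) (a*t)"
  by (cases k) simp
lemma rm_single' [simp]: "rm (sg k t) (sg v a) = sg (fst k, snd k @ v) (t*a)"
  by (cases k) simp

lemma lm_lm: "lm a (lm b T) = lm (amul a b) T"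
  apply (induction a rule: pm_induct)
  apply simp
  subgoal apply (induction b rule: pm_induct)
  apply simp
  subgoal by (induction T rule: pm_induct) (simp_all add: mult.assoc)
  apply simp
  done
  apply simp
  done

lemma rm_rm: "rm (rm T c) d = rm T (amul c d)"
  apply (induction T rule: pm_induct)
  apply simp
  subgoal apply (induction c rule: pm_induct)
  apply simp
  subgoal by (induction d rule: pm_induct) (simp_all add: mult.assoc)
  apply simp
  done
  apply simp
  done

lemma lm_rm: "lm a (rm T d) = rm (lm a T) d"
  apply (induction a rule: pm_induct)
  apply simp
  subgoal apply (induction T rule: pm_induct)
  apply simp
  subgoal by (induction d rule: pm_induct) (simp_all add: mult.assoc)
  apply simp
  done
  apply simp
  done

lemma lm_sc1 [simp]: "lm (sc c a) T = sc c (lm a T)"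
  apply (induction a rule: pm_induct)
  apply simp
  subgoal by (induction T rule: pm_induct) (simp_all add: mult.assoc)
  apply simp
  done
lemma lm_sc2 [simp]: "lm a (sc c T) = sc c (lm a T)"
  apply (induction a rule: pm_induct)
  apply simp
  subgoal by (induction T rule: pm_induct) (simp_all add: ac_simps)
  apply simp
  done
lemma rm_sc1 [simp]: "rm (sc c T) d = sc c (rm T d)"
  apply (induction T rule: pm_induct)
  apply simp
  subgoal by (induction d rule: pm_induct) (simp_all add: mult.assoc)
  apply simp
  done
lemma rm_sc2 [simp]: "rm T (sc c d) = sc c (rm T d)"
  apply (induction T rule: pm_induct)
  apply simp
  subgoal by (induction d rule: pm_induct) (simp_all add: ac_simps)
  apply simp
  done

lemma ad_word_lmrm: "ad_word (z # w) m = lm (gen_el z) (ad_word w m) - rm (ad_word w m) (gen_el z)"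
  by (simp add: lm_def rm_def)

declare ad_word.simps(2) [simp del]

lemma ad_word_add [simp]: "ad_word w (m + m') = ad_word w m + ad_word w m'"
  by (induction w) (simp_all add: ad_word_lmrm)
lemma ad_word_zero [simp]: "ad_word w 0 = 0"
  by (rule add_zero_gen, simp)
lemma ad_word_diff [simp]: "ad_word w (m - m') = ad_word w m - ad_word w m'"
  by (rule add_diff_gen, simp)
lemma ad_word_sc [simp]: "ad_word w (sc c m) = sc c (ad_word w m)"
  by (induction w) (simp_all add: ad_word_lmrm)
lemma ad_word_append: "ad_word (u @ v) m = ad_word u (ad_word v m)"
  by (induction u) (simp_all add: ad_word_lmrm)

lemma ad_lext: "ad a m = lext (\<lambda>w c. sc c (ad_word w m)) a"
  by (simp add: ad_def lext_def smul_sc)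

lemma ad_add1 [simp]: "ad (a + a') m = ad a m + ad a' m"
  unfolding ad_lext by (rule lext_add) simp
lemma ad_add2 [simp]: "ad a (m + m') = ad a m + ad a m'"
  unfolding ad_lext by (simp add: lext_fun_add)
lemma ad_single [simp]: "ad (sg w c) m = sc c (ad_word w m)"
  unfolding ad_lext by (simp add: lext_single)
lemma ad_zero [simp]: "ad 0 m = 0" "ad a 0 = 0"
  by (rule add_zero_gen, simp)+
lemma ad_diff [simp]: "ad (a-a') m = ad a m - ad a' m" "ad a (m - m') = ad a m - ad a m'"
  by (rule add_diff_gen, simp)+
lemma ad_sc1 [simp]: "ad (sc c a) m = sc c (ad a m)"
  by (induction a rule: pm_induct) simp_all
lemma ad_sc2 [simp]: "ad a (sc c m) = sc c (ad a m)"
  by (induction a rule: pm_induct) (simp_all add: mult.commute)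
lemma ad_amul: "ad (amul p q) m = ad p (ad q m)"
  apply (induction p rule: pm_induct)
  apply simp
  subgoal by (induction q rule: pm_induct) (simp_all add: ad_word_append mult.commute)
  apply simp
  done


lemma rm_sum1: "rm (sum f S) d = (\<Sum>i\<in>S. rm (f i) d)"
  by (rule add_sum_gen[where F="\<lambda>T. rm T d"]) simp
lemma lm_sum2: "lm a (sum f S) = (\<Sum>i\<in>S. lm a (f i))"
  by (rule add_sum_gen) simp

lemma eps_add [simp]: "eps (p + q) = eps p + eps q"
  by (simp add: eps_def lookup_add)
lemma eps_diff [simp]: "eps (p - q) = eps p - eps q"
  by (rule add_diff_gen, simp)
lemma eps_zero [simp]: "eps 0 = 0"
  by (simp add: eps_def)
lemma eps_single [simp]: "eps (sg w c) = (if w = [] then c else 0)"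
  by (simp add: eps_def lookup_single when_def)
lemma eps_sc [simp]: "eps (sc c p) = c * eps p"
  by (simp add: eps_def)
lemma eps_amul [simp]: "eps (amul p q) = eps p * eps q"
  apply (induction p rule: pm_induct)
  apply simp
  subgoal by (induction q rule: pm_induct) (simp_all add: algebra_simps)
  apply (simp add: algebra_simps)
  done

lemma id_eps_lext: "id_eps T = lext (\<lambda>k \<beta>. sg (fst k) (\<beta> * (if snd k = [] then 1 else 0))) T"
  by (simp add: id_eps_def lext_def split_def)

lemma id_eps_add [simp]: "id_eps (T + T') = id_eps T + id_eps T'"
  unfolding id_eps_lext by (rule lext_add) (simp add: distrib_right single_add)
lemma id_eps_single [simp]: "id_eps (sg k c) = sg (fst k) (if snd k = [] then c else 0)"
  unfolding id_eps_lext by (simp add: lext_single)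
lemma id_eps_zero [simp]: "id_eps 0 = 0"
  by (rule add_zero_gen, simp)
lemma id_eps_diff [simp]: "id_eps (T - T') = id_eps T - id_eps T'"
  by (rule add_diff_gen, simp)
lemma id_eps_sc [simp]: "id_eps (sc c T) = sc c (id_eps T)"
  by (induction T rule: pm_induct) simp_all

lemma id_eps_rm: "id_eps (rm T d) = sc (eps d) (id_eps T)"
  apply (induction T rule: pm_induct)
  apply simp
  subgoal by (induction d rule: pm_induct) (simp_all add: algebra_simps single_add)
  apply simp
  done

lemma id_eps_lm: "id_eps (lm a T) = amul a (id_eps T)"
  apply (induction a rule: pm_induct)
  apply simp
  subgoal by (induction T rule: pm_induct) simp_all
  apply simp
  done

lemma dA_lext: "dA z p = lext (\<lambda>w c. \<Sum>i\<in>{i. i < length w \<and> w ! i = z}.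
      sg (take i w, drop (Suc i) w) c) p"
  by (simp add: dA_def lext_def)

lemma dA_add [simp]: "dA z (p + q) = dA z p + dA z q"
  unfolding dA_lext by (rule lext_add) (simp add: single_add sum.distrib)
lemma dA_single [simp]: "dA z (sg w c) = (\<Sum>i\<in>{i. i < length w \<and> w ! i = z}.
      sg (take i w, drop (Suc i) w) c)"
  unfolding dA_lext by (simp add: lext_single)
lemma dA_zero [simp]: "dA z 0 = 0"
  by (rule add_zero_gen, simp)
lemma dA_diff [simp]: "dA z (p - q) = dA z p - dA z q"
  by (rule add_diff_gen, simp)
lemma dA_sc [simp]: "dA z (sc c p) = sc c (dA z p)"
  by (induction p rule: pm_induct) (simp_all add: sc_sum)

lemma idx_append: "{i. i < length (u@v) \<and> (u@v) ! i = z} =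
   {i. i < length u \<and> u ! i = z} \<union> (\<lambda>j. length u + j) ` {j. j < length v \<and> v ! j = z}"
proof -
  have "i \<in> (\<lambda>j. length u + j) ` {j. j < length v \<and> v ! j = z}"
    if "i < length u + length v" "\<not> i < length u" "v ! (i - length u) = z" for i
    using that by (intro image_eqI[where x="i - length u"]) auto
  then show ?thesis by (auto simp: nth_append)
qed

lemma dA_word:
  "(\<Sum>i\<in>{i. i < length (u@v) \<and> (u@v) ! i = z}. sg (take i (u@v), drop (Suc i) (u@v)) (a*b))
   = rm (\<Sum>i\<in>{i. i < length u \<and> u ! i = z}. sg (take i u, drop (Suc i) u) a) (sg v b)
   + lm (sg u a) (\<Sum>i\<in>{i. i < length v \<and> v ! i = z}. sg (take i v, drop (Suc i) v) b)"
proof -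
  have d: "{i. i < length u \<and> u ! i = z} \<inter> (\<lambda>j. length u + j) ` {j. j < length v \<and> v ! j = z} = {}"
    by auto
  have inj: "inj_on (\<lambda>j. length u + j) A" for A by (auto simp: inj_on_def)
  show ?thesis
    unfolding idx_append
    by (subst sum.union_disjoint[OF _ _ d], simp, simp, simp add: sum.reindex[OF inj] rm_sum1 lm_sum2)
qed

lemma dA_amul: "dA z (amul p q) = rm (dA z p) q + lm p (dA z q)"
  apply (induction p rule: pm_induct)
  apply simp
  subgoal apply (induction q rule: pm_induct)
    apply simp
    apply (simp only: amul_single dA_single dA_word)
    apply simp
    done
  apply simp
  done

lemma eps_Lie: "l \<in> freeLie \<Longrightarrow> eps l = 0"
  by (induction rule: freeLie.induct) (simp_all add: gen_el_def smul_sc bracket_def)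

lemma ad_Lie: "l \<in> freeLie \<Longrightarrow> ad l m = lm l m - rm m l"
proof (induction arbitrary: m rule: freeLie.induct)
  case (gen z)
  then show ?case by (simp add: gen_el_def ad_word_lmrm)
next
  case (brk a b)
  have "ad (bracket a b) m = ad a (ad b m) - ad b (ad a m)" by (simp add: bracket_def ad_amul)
  also have "\<dots> = lm a (lm b m - rm m b) - rm (lm b m - rm m b) a
     - (lm b (lm a m - rm m a) - rm (lm a m - rm m a) b)" by (simp only: brk.IH)
  also have "\<dots> = lm (bracket a b) m - rm m (bracket a b)"
    by (simp add: bracket_def lm_lm rm_rm lm_rm algebra_simps)
  finally show ?case .
qed (simp_all add: smul_sc)

theorem mainTheorem14:
  fixes l :: alg and x0 :: gen
  assumes "l \<in> freeLie"
  shows "dA x0 l = ad (dL x0 l) one_tensor"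
  using assms
proof (induction rule: freeLie.induct)
  case (gen z)
  have s: "{i. i = 0 \<and> [z] ! i = x0} = (if z = x0 then {0} else {})" by auto
  show ?case by (simp add: gen_el_def dL_def s one_tensor_def)
next
  case (brk a b)
  have ea: "eps a = 0" "eps b = 0" using brk.hyps by (simp_all add: eps_Lie)
  have 1: "dA x0 (bracket a b) = rm (dA x0 a) b + lm a (dA x0 b) - (rm (dA x0 b) a + lm b (dA x0 a))"
    by (simp add: bracket_def dA_amul)
  have 2: "dL x0 (bracket a b) = amul a (dL x0 b) - amul b (dL x0 a)"
    by (simp add: bracket_def dL_def dA_amul id_eps_rm id_eps_lm ea)
  have "ad (dL x0 (bracket a b)) one_tensor = ad a (dA x0 b) - ad b (dA x0 a)"
    by (simp only: 2 ad_diff ad_amul brk.IH)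
  also have "\<dots> = lm a (dA x0 b) - rm (dA x0 b) a - (lm b (dA x0 a) - rm (dA x0 a) b)"
    by (simp only: ad_Lie brk.hyps)
  finally show ?case unfolding 1 by (simp add: algebra_simps)
qed (simp_all add: smul_sc dL_def)

end
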